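(* $q_0$ satisfies $L_0^2\big(\xi'(q_0)+h^2\big)=q_0$.
   Context: Let $(\gamma_p)_{p\ge2}$ be real with $\sum_{p\ge2}2^p\gamma_p^2<\infty$ and $\gamma_p=0$ for all odd $p$, $h\in\mathbb R$, $\xi(s)=\sum_{p\ge2}\gamma_p^2s^p$. $\mathcal N$ is the set of nonnegative nondecreasing right-continuous functions on $[0,1)$, $\mathcal K=\{(L,\alpha)\in(0,\infty)\times\mathcal N:L>\int_0^1\alpha\}$, $\mathcal Q(L,\alpha)=\frac12\big((\xi'(1)+h^2)L-\int_0^1\xi''(q)(\int_0^q\alpha(s)ds)dq+\int_0^1\frac{dq}{L-\int_0^q\alpha(s)ds}\big)$, and $(L_0,\alpha_0)$ is the (known, unique) minimizer of $\mathcal Q$ on $\mathcal K$. Set $q_0=\inf\{s\in[0,1):\alpha_0(s)>0\}$ if this set is nonempty and $q_0=1$ otherwise. *)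

theory Defs
  imports "HOL-Analysis.Analysis"
begin

definition xi :: "(nat \<Rightarrow> real) \<Rightarrow> real \<Rightarrow> real" where
  "xi \<gamma> s = (\<Sum>p. if 2 \<le> p then (\<gamma> p)\<^sup>2 * s ^ p else 0)"

definition classN :: "(real \<Rightarrow> real) set" where
  "classN = {\<alpha>. (\<forall>s\<in>{0..<1}. 0 \<le> \<alpha> s) \<and> mono_on {0..<1} \<alpha> \<and>
                 (\<forall>s\<in>{0..<1}. continuous (at_right s) \<alpha>)}"

definition classK :: "(real \<times> (real \<Rightarrow> real)) set" where
  "classK = {(L, \<alpha>). 0 < L \<and> \<alpha> \<in> classN \<and> \<alpha> integrable_on {0..1} \<and>
                       L > integral {0..1} \<alpha>}"

definition Qfun :: "(nat \<Rightarrow> real) \<Rightarrow> real \<Rightarrow> real \<Rightarrow> (real \<Rightarrow> real) \<Rightarrow> real" where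
  "Qfun \<gamma> h L \<alpha> = (1/2) * ((deriv (xi \<gamma>) 1 + h\<^sup>2) * L
      - integral {0..1} (\<lambda>q. deriv (deriv (xi \<gamma>)) q * integral {0..q} \<alpha>)
      + integral {0..1} (\<lambda>q. 1 / (L - integral {0..q} \<alpha>)))"

definition q0_of :: "(real \<Rightarrow> real) \<Rightarrow> real" where
  "q0_of \<alpha> = (if {s\<in>{0..<1}. \<alpha> s > 0} \<noteq> {} then Inf {s\<in>{0..<1}. \<alpha> s > 0} else 1)"

end

theory Submission
  imports Defs
begin


definition cxi :: "(nat \<Rightarrow> real) \<Rightarrow> nat \<Rightarrow> real" where
  "cxi \<gamma> p = (if 2 \<le> p then (\<gamma> p)\<^sup>2 else 0)"

lemma xi_eq: "xi \<gamma> s = (\<Sum>p. cxi \<gamma> p * s ^ p)"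
  unfolding xi_def cxi_def by (rule arg_cong[where f=suminf]) auto

lemma xi_facts:
  assumes summ: "summable (\<lambda>p. 2 ^ p * (\<gamma> p)\<^sup>2)"
  obtains g1 g2 :: "real \<Rightarrow> real" where
    "\<And>z. \<bar>z\<bar> < 2 \<Longrightarrow> deriv (xi \<gamma>) z = g1 z"
    "\<And>z. \<bar>z\<bar> < 2 \<Longrightarrow> deriv (deriv (xi \<gamma>)) z = g2 z"
    "\<And>z. \<bar>z\<bar> < 2 \<Longrightarrow> (deriv (xi \<gamma>) has_field_derivative g2 z) (at z)"
    "\<And>z. \<bar>z\<bar> < 2 \<Longrightarrow> isCont g2 z"
    "g1 0 = 0"
proof -
  let ?c = "cxi \<gamma>"
  have s2: "summable (\<lambda>n. ?c n * 2 ^ n)"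
    by (rule summable_comparison_test[OF _ summ]) (auto simp: cxi_def intro!: exI[of _ 0])
  have s0: "summable (\<lambda>n. ?c n * z ^ n)" if "norm z < 2" for z :: real
    by (rule powser_inside[OF s2]) (use that in auto)
  have s1: "summable (\<lambda>n. diffs ?c n * z ^ n)" if "norm z < 2" for z :: real
    by (rule termdiff_converges[OF that s0])
  have s1': "summable (\<lambda>n. diffs (diffs ?c) n * z ^ n)" if "norm z < 2" for z :: real
    by (rule termdiff_converges[OF that s1])
  define g1 where "g1 z = (\<Sum>n. diffs ?c n * z ^ n)" for z :: real
  define g2 where "g2 z = (\<Sum>n. diffs (diffs ?c) n * z ^ n)" for z :: real
  define g3 where "g3 z = (\<Sum>n. diffs (diffs (diffs ?c)) n * z ^ n)" for z :: real
  have d0: "(xi \<gamma> has_field_derivative g1 z) (at z)" if "\<bar>z\<bar> < 2" for z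
    unfolding g1_def xi_eq[abs_def] by (rule termdiffs_strong'[of 2]) (use s0 that in auto)
  have d1: "(g1 has_field_derivative g2 z) (at z)" if "\<bar>z\<bar> < 2" for z
    unfolding g1_def g2_def by (rule termdiffs_strong'[of 2]) (use s1 that in auto)
  have d2: "(g2 has_field_derivative g3 z) (at z)" if "\<bar>z\<bar> < 2" for z
    unfolding g3_def g2_def by (rule termdiffs_strong'[of 2]) (use s1' that in auto)
  have e1: "deriv (xi \<gamma>) z = g1 z" if "\<bar>z\<bar> < 2" for z
    using d0[OF that] by (rule DERIV_imp_deriv)
  have d1': "(deriv (xi \<gamma>) has_field_derivative g2 z) (at z)" if "\<bar>z\<bar> < 2" for z
  proof (rule has_field_derivative_transform_within_open[OF d1[OF that], of "{-2<..<2}"])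
    show "open {-2<..<(2::real)}" by simp
    show "z \<in> {-2<..<2}" using that by auto
    show "\<And>x. x \<in> {-2<..<2} \<Longrightarrow> g1 x = deriv (xi \<gamma>) x" using e1 by auto
  qed
  show ?thesis
  proof
    show "\<And>z. \<bar>z\<bar> < 2 \<Longrightarrow> deriv (xi \<gamma>) z = g1 z" by (rule e1)
    show "\<And>z. \<bar>z\<bar> < 2 \<Longrightarrow> deriv (deriv (xi \<gamma>)) z = g2 z"
      using d1' by (rule DERIV_imp_deriv)
    show "\<And>z. \<bar>z\<bar> < 2 \<Longrightarrow> (deriv (xi \<gamma>) has_field_derivative g2 z) (at z)" by (rule d1')
    show "\<And>z. \<bar>z\<bar> < 2 \<Longrightarrow> isCont g2 z" using d2 DERIV_isCont by blast
    show "g1 0 = 0" unfolding g1_def by (simp add: diffs_def cxi_def)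
  qed
qed



lemma pw_ineq:
  fixes y e m :: real
  assumes "m > 0" "m \<le> y" "m/2 \<le> y + e"
  shows "1/(y+e) - 1/y \<le> - e / y^2 + 2 * e^2 / m^3"
proof -
  have yp: "y > 0" "y + e > 0" using assms by auto
  have id: "1/(y+e) - 1/y + e/y^2 = e^2/(y^2*(y+e))"
    using yp by (simp add: divide_simps power2_eq_square) (simp add: algebra_simps)
  have "m^3/2 \<le> y^2*(y+e)"
  proof -
    have "m^2 \<le> y^2" using assms by (intro power_mono) auto
    hence "m^2 * (m/2) \<le> y^2 * (y+e)" using assms by (intro mult_mono) auto
    thus ?thesis by (simp add: power3_eq_cube power2_eq_square)
  qed
  hence "e^2/(y^2*(y+e)) \<le> e^2/(m^3/2)"
    using assms by (intro divide_left_mono) auto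
  also have "\<dots> = 2*e^2/m^3" by simp
  finally show ?thesis using id by linarith
qed

lemma cont_bound:
  fixes f :: "real \<Rightarrow> real"
  assumes "continuous_on {a..b} f"
  obtains M where "M > 0" "\<And>x. x \<in> {a..b} \<Longrightarrow> \<bar>f x\<bar> \<le> M"
proof -
  have "compact (f ` {a..b})" using assms compact_continuous_image by blast
  then obtain M where "M > 0" "\<forall>x\<in>f ` {a..b}. norm x \<le> M"
    using compact_imp_bounded bounded_pos by metis
  thus ?thesis using that by auto
qed

lemma core:
  fixes y D :: "real \<Rightarrow> real" and c m \<delta> :: real
  assumes cy: "continuous_on {0..1} y" and cD: "continuous_on {0..1} D"
    and ym: "\<And>q. q \<in> {0..1} \<Longrightarrow> m \<le> y q" and mpos: "m > 0" and dpos: "\<delta> > 0"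
    and H: "\<And>t. 0 < t \<Longrightarrow> t < \<delta> \<Longrightarrow> 0 \<le> t*c + integral {0..1} (\<lambda>q. 1/(y q + t*D q) - 1/(y q))"
  shows "0 \<le> c - integral {0..1} (\<lambda>q. D q / (y q)^2)"
proof (rule ccontr)
  assume neg: "\<not> ?thesis"
  define I where "I = integral {0..1} (\<lambda>q. D q / (y q)^2)"
  obtain MD where MD: "MD > 0" "\<And>q. q \<in> {0..1} \<Longrightarrow> \<bar>D q\<bar> \<le> MD" using cont_bound[OF cD] by blast
  define C where "C = 2 * MD^2 / m^3"
  have Cpos: "C > 0" unfolding C_def using MD mpos by auto
  define t where "t = min (\<delta>/2) (min (m/(2*MD)) ((I - c)/(2*C)))"
  have Ic: "I - c > 0" using neg I_def by auto
  have tpos: "t > 0" unfolding t_def using dpos mpos MD Ic Cpos by auto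
  have tlt: "t < \<delta>" unfolding t_def using dpos by auto
  have "t \<le> m/(2*MD)" unfolding t_def by simp
  hence "t * MD \<le> m/(2*MD) * MD" using MD by (intro mult_right_mono) auto
  hence tMD: "t * MD \<le> m/2" using MD by simp
  have "t \<le> (I - c)/(2*C)" unfolding t_def by simp
  hence "t * C \<le> (I - c)/(2*C) * C" using Cpos by (intro mult_right_mono) auto
  hence tC: "t * C \<le> (I - c)/2" using Cpos by simp
  have ypos: "y q > 0" if "q \<in> {0..1}" for q using ym[OF that] mpos by auto
  have yt: "m/2 \<le> y q + t * D q" if "q \<in> {0..1}" for q
  proof -
    have "\<bar>t * D q\<bar> \<le> t * MD" using MD(2)[OF that] tpos by (simp add: abs_mult)
    thus ?thesis using ym[OF that] tMD by linarith
  qed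
  have pw: "1/(y q + t*D q) - 1/(y q) \<le> - t * (D q / (y q)^2) + t^2 * C" if "q \<in> {0..1}" for q
  proof -
    have "1/(y q + t*D q) - 1/(y q) \<le> - (t * D q) / (y q)^2 + 2 * (t*D q)^2 / m^3"
      by (rule pw_ineq[OF mpos ym[OF that] yt[OF that]])
    moreover have "(t*D q)^2 \<le> t^2 * MD^2"
    proof -
      have "(D q)^2 \<le> MD^2" using abs_le_square_iff[of "D q" MD] MD(1) MD(2)[OF that] by auto
      thus ?thesis by (simp add: power_mult_distrib mult_left_mono)
    qed
    hence "2 * (t*D q)^2 / m^3 \<le> 2 * (t^2 * MD^2) / m^3" using mpos
      by (intro divide_right_mono) auto
    moreover have "2 * (t^2 * MD^2) / m^3 = t^2 * C" unfolding C_def by simp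
    moreover have "- (t * D q) / (y q)^2 = - t * (D q / (y q)^2)" by simp
    ultimately show ?thesis by linarith
  qed
  have c1: "continuous_on {0..1} (\<lambda>q. 1/(y q + t*D q) - 1/(y q))"
  proof -
    have "y q + t*D q \<noteq> 0" if "q \<in> {0..1}" for q using yt[OF that] mpos by linarith
    thus ?thesis using cy cD ypos by (intro continuous_intros) (auto, fastforce)
  qed
  have c2: "continuous_on {0..1} (\<lambda>q. - t * (D q / (y q)^2) + t^2 * C)"
    using cy cD ypos by (intro continuous_intros) (auto, fastforce)
  have c3: "continuous_on {0..1} (\<lambda>q. D q / (y q)^2)"
    using cy cD ypos by (intro continuous_intros) (auto, fastforce)
  have "integral {0..1} (\<lambda>q. 1/(y q + t*D q) - 1/(y q)) \<le> integral {0..1} (\<lambda>q. - t * (D q / (y q)^2) + t^2 * C)"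
    by (rule integral_le[OF integrable_continuous_interval[OF c1] integrable_continuous_interval[OF c2] pw])
  also have "\<dots> = - t * I + t^2 * C"
  proof -
    have hI: "((\<lambda>q. D q / (y q)^2) has_integral I) {0..1}"
      unfolding I_def using integrable_continuous_interval[OF c3] by (rule integrable_integral)
    have "((\<lambda>q. - t * (D q / (y q)^2) + t^2 * C) has_integral (-t * I + t^2 * C)) {0..1}"
      using has_integral_add[OF has_integral_mult_right[OF hI, of "-t"] has_integral_const_real[of "t^2*C" 0 1]]
      by simp
    thus ?thesis by (simp add: integral_unique)
  qed
  finally have "0 \<le> t * c - t * I + t^2 * C" using H[OF tpos tlt] by linarith
  hence "0 \<le> t * (c - I + t * C)" by (simp add: algebra_simps power2_eq_square)
  hence "0 \<le> c - I + t * C" using tpos by (simp add: zero_le_mult_iff)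
  moreover have "(I - c)/2 = I/2 - c/2" by (simp add: field_simps)
  ultimately show False using tC Ic by linarith
qed



lemma int_bound_const:
  fixes f :: "real \<Rightarrow> real"
  assumes "continuous_on {a..b} f" "a \<le> b" "\<And>x. x \<in> {a..b} \<Longrightarrow> \<bar>f x\<bar> \<le> K"
  shows "\<bar>integral {a..b} f\<bar> \<le> K * (b - a)"
proof -
  have i: "f integrable_on {a..b}" using assms(1) by (rule integrable_continuous_interval)
  have "integral {a..b} f \<le> integral {a..b} (\<lambda>x. K)"
    by (rule integral_le[OF i]) (use assms(3) in \<open>auto simp: abs_le_iff\<close>)
  moreover have "integral {a..b} (\<lambda>x. -K) \<le> integral {a..b} f"
    by (rule integral_le[OF _ i]) (use assms(3) in \<open>force simp: abs_le_iff\<close>)+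
  ultimately show ?thesis using assms(2) by (auto simp: algebra_simps)
qed

lemma split_est:
  fixes W G :: "real \<Rightarrow> real"
  assumes cW: "continuous_on {0..1} W" and cG: "continuous_on {0..1} G"
    and a: "0 \<le> a" "a \<le> r" "r \<le> 1"
    and W0: "\<And>q. q \<in> {0..a} \<Longrightarrow> W q = 0"
    and Wb: "\<And>q. q \<in> {a..r} \<Longrightarrow> \<bar>W q\<bar> \<le> w"
    and Wc: "\<And>q. q \<in> {r..1} \<Longrightarrow> W q = w0"
    and GM: "\<And>q. q \<in> {0..1} \<Longrightarrow> \<bar>G q\<bar> \<le> M"
  shows "\<bar>integral {0..1} (\<lambda>q. W q * G q) - w0 * integral {r..1} G\<bar> \<le> w * M * (r - a)"
proof -
  let ?f = "\<lambda>q. W q * G q"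
  have cf: "continuous_on {0..1} ?f" using cW cG by (intro continuous_intros)
  have i1: "?f integrable_on {0..1}" using cf by (rule integrable_continuous_interval)
  have i2: "?f integrable_on {0..r}" by (rule integrable_subinterval_real[OF i1]) (use a in auto)
  have e1: "integral {0..1} ?f = integral {0..r} ?f + integral {r..1} ?f"
    using Henstock_Kurzweil_Integration.integral_combine[OF _ _ i1, of r] a by simp
  have e2: "integral {0..r} ?f = integral {0..a} ?f + integral {a..r} ?f"
    using Henstock_Kurzweil_Integration.integral_combine[OF _ _ i2, of a] a by simp
  have e3: "integral {0..a} ?f = 0"
  proof -
    have "integral {0..a} ?f = integral {0..a} (\<lambda>q. 0)"
      by (rule integral_cong) (use W0 in auto)
    thus ?thesis by simp
  qed
  have e4: "integral {r..1} ?f = w0 * integral {r..1} G"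
  proof -
    have "integral {r..1} ?f = integral {r..1} (\<lambda>q. w0 * G q)"
      by (rule integral_cong) (use Wc in auto)
    thus ?thesis by simp
  qed
  have "\<bar>integral {a..r} ?f\<bar> \<le> (w * M) * (r - a)"
  proof (rule int_bound_const)
    show "continuous_on {a..r} ?f" using cf by (rule continuous_on_subset) (use a in auto)
    show "a \<le> r" by fact
    fix x assume x: "x \<in> {a..r}"
    have "\<bar>W x\<bar> \<le> w" using Wb[OF x] .
    moreover have "\<bar>G x\<bar> \<le> M" using GM x a by auto
    ultimately show "\<bar>W x * G x\<bar> \<le> w * M" by (simp add: abs_mult mult_mono')
  qed
  thus ?thesis using e1 e2 e3 e4 by simp
qed



lemma int_nonneg_spike1:
  fixes f :: "real \<Rightarrow> real"
  assumes "f integrable_on {a..b}" "\<And>x. x \<in> {a..b} \<Longrightarrow> x \<noteq> 1 \<Longrightarrow> 0 \<le> f x"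
  shows "0 \<le> integral {a..b} f"
proof -
  let ?g = "\<lambda>x. if x = 1 then 0 else f x"
  have "integral {a..b} f = integral {a..b} ?g"
    by (rule integral_spike[of "{1}"]) auto
  moreover have "?g integrable_on {a..b}"
    by (rule integrable_spike[OF assms(1), of "{1}"]) auto
  ultimately show ?thesis using assms(2) by (auto intro!: integral_nonneg)
qed

lemma cont_right_transfer:
  fixes f g :: "real \<Rightarrow> real"
  assumes "continuous (at_right x) g" "f x = g x" "x < b" "\<And>y. x < y \<Longrightarrow> y < b \<Longrightarrow> f y = g y"
  shows "continuous (at_right x) f"
proof -
  have ev: "eventually (\<lambda>y. g y = f y) (at_right x)"
    using eventually_at_right_real[OF assms(3)] by (rule eventually_mono) (use assms(4) in auto)
  have "(g \<longlongrightarrow> g x) (at_right x)" using assms(1) by (simp add: continuous_within)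
  hence "(f \<longlongrightarrow> f x) (at_right x)" using Lim_transform_eventually[OF _ ev] assms(2) by simp
  thus ?thesis by (simp add: continuous_within)
qed

theorem lemma10:
  fixes \<gamma> :: "nat \<Rightarrow> real" and h L0 :: real and \<alpha>0 :: "real \<Rightarrow> real"
  assumes summ: "summable (\<lambda>p. 2 ^ p * (\<gamma> p)\<^sup>2)"
    and odd0: "\<And>p. odd p \<Longrightarrow> \<gamma> p = 0"
    and inK: "(L0, \<alpha>0) \<in> classK"
    and minim: "\<And>L \<alpha>. (L, \<alpha>) \<in> classK \<Longrightarrow> Qfun \<gamma> h L0 \<alpha>0 \<le> Qfun \<gamma> h L \<alpha>"
    and uniq: "\<And>L \<alpha>. (L, \<alpha>) \<in> classK \<Longrightarrow> (\<forall>(L', \<alpha>')\<in>classK. Qfun \<gamma> h L \<alpha> \<le> Qfun \<gamma> h L' \<alpha>')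
                 \<Longrightarrow> L = L0 \<and> (\<forall>s\<in>{0..<1}. \<alpha> s = \<alpha>0 s)"
  shows "L0\<^sup>2 * (deriv (xi \<gamma>) (q0_of \<alpha>0) + h\<^sup>2) = q0_of \<alpha>0"
proof -
  obtain g1 g2 where g1: "\<And>z. \<bar>z\<bar> < 2 \<Longrightarrow> deriv (xi \<gamma>) z = g1 z"
    and g2: "\<And>z. \<bar>z\<bar> < 2 \<Longrightarrow> deriv (deriv (xi \<gamma>)) z = g2 z"
    and dg: "\<And>z. \<bar>z\<bar> < 2 \<Longrightarrow> (deriv (xi \<gamma>) has_field_derivative g2 z) (at z)"
    and cg2: "\<And>z. \<bar>z\<bar> < 2 \<Longrightarrow> isCont g2 z"
    and g10: "g1 0 = 0"
    using xi_facts[OF summ] by blast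
  define Xi where "Xi = deriv (deriv (xi \<gamma>))"
  define K1 where "K1 = deriv (xi \<gamma>) 1 + h\<^sup>2"
  have cXi: "continuous_on {0..1} Xi"
  proof -
    have "continuous_on {0..1} g2" using cg2 by (intro continuous_at_imp_continuous_on) auto
    thus ?thesis by (rule continuous_on_eq) (auto simp: Xi_def g2)
  qed
  have L0pos: "0 < L0" and aN: "\<alpha>0 \<in> classN" and aint: "\<alpha>0 integrable_on {0..1}"
    and Lgt: "integral {0..1} \<alpha>0 < L0"
    using inK by (auto simp: classK_def)
  have anonneg: "\<And>x. x \<in> {0..<1} \<Longrightarrow> 0 \<le> \<alpha>0 x" and amono: "mono_on {0..<1} \<alpha>0"
    and arc: "\<And>x. x \<in> {0..<1} \<Longrightarrow> continuous (at_right x) \<alpha>0"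
    using aN by (auto simp: classN_def)
  define A where "A q = integral {0..q} \<alpha>0" for q
  have aint': "\<alpha>0 integrable_on {a..b}" if "0 \<le> a" "b \<le> 1" for a b
  proof (cases "a \<le> b")
    case True thus ?thesis using integrable_subinterval_real[OF aint] that by auto
  next
    case False thus ?thesis by (simp add: integrable_on_empty)
  qed
  have cA: "continuous_on {0..1} A" unfolding A_def
    by (rule indefinite_integral_continuous_1[OF aint])
  have iab: "0 \<le> integral {a..b} \<alpha>0" if "0 \<le> a" "b \<le> 1" for a b
    by (rule int_nonneg_spike1[OF aint'[OF that]]) (use anonneg that in auto)
  have Asplit: "A b = A a + integral {a..b} \<alpha>0" if "0 \<le> a" "a \<le> b" "b \<le> 1" for a b
    unfolding A_def using Henstock_Kurzweil_Integration.integral_combine[OF that(1,2) aint'[of 0 b]] that by simp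
  have Amono: "A a \<le> A b" if "0 \<le> a" "a \<le> b" "b \<le> 1" for a b
    using Asplit[OF that] iab[of a b] that by auto
  have Anonneg: "0 \<le> A a" if "0 \<le> a" "a \<le> 1" for a
    unfolding A_def using iab[of 0 a] that by auto
  define m where "m = L0 - A 1"
  have mpos: "m > 0" using Lgt by (simp add: m_def A_def)
  have ym: "m \<le> L0 - A q" if "q \<in> {0..1}" for q
    using Amono[of q 1] that by (auto simp: m_def)
  have pert: "0 \<le> K1*l - integral {0..1} (\<lambda>q. Xi q * B q) - integral {0..1} (\<lambda>q. (l - B q)/(L0 - A q)^2)"
    if cB: "continuous_on {0..1} B" and dpos: "\<delta> > 0"
      and ex: "\<And>t. 0 < t \<Longrightarrow> t < \<delta> \<Longrightarrow> \<exists>\<alpha>'. (L0 + t*l, \<alpha>') \<in> classK \<and> (\<forall>q\<in>{0..1}. integral {0..q} \<alpha>' = A q + t * B q)"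
    for B :: "real \<Rightarrow> real" and l \<delta> :: real
  proof -
    define y where "y q = L0 - A q" for q
    define D where "D q = l - B q" for q
    define c where "c = K1*l - integral {0..1} (\<lambda>q. Xi q * B q)"
    have cy: "continuous_on {0..1} y" unfolding y_def using cA by (intro continuous_intros)
    have cD: "continuous_on {0..1} D" unfolding D_def using cB by (intro continuous_intros)
    obtain MD where MD: "MD > 0" "\<And>q. q \<in> {0..1} \<Longrightarrow> \<bar>D q\<bar> \<le> MD" using cont_bound[OF cD] by blast
    define \<delta>' where "\<delta>' = min \<delta> (m/(2*MD))"
    have iXA: "(\<lambda>q. Xi q * A q) integrable_on {0..1}"
      using cXi cA by (intro integrable_continuous_interval continuous_intros)
    have iXB: "(\<lambda>q. Xi q * B q) integrable_on {0..1}"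
      using cXi cB by (intro integrable_continuous_interval continuous_intros)
    have ypos: "y q > 0" if "q \<in> {0..1}" for q using ym[OF that] mpos by (simp add: y_def)
    have iy: "(\<lambda>q. 1 / y q) integrable_on {0..1}"
      using cy ypos by (intro integrable_continuous_interval continuous_intros) (auto, fastforce)
    have Q0: "Qfun \<gamma> h L0 \<alpha>0 = 1/2 * (K1*L0 - integral {0..1} (\<lambda>q. Xi q * A q) + integral {0..1} (\<lambda>q. 1 / y q))"
      unfolding Qfun_def K1_def Xi_def y_def A_def ..
    have "0 \<le> c - integral {0..1} (\<lambda>q. D q/(y q)^2)"
    proof (rule core[OF cy cD _ mpos, of \<delta>'])
      show "\<And>q. q \<in> {0..1} \<Longrightarrow> m \<le> y q" using ym by (simp add: y_def)
      show "\<delta>' > 0" unfolding \<delta>'_def using dpos mpos MD by auto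
      fix t assume t: "0 < t" "t < \<delta>'"
      obtain \<alpha>' where a': "(L0 + t*l, \<alpha>') \<in> classK" and ia: "\<forall>q\<in>{0..1}. integral {0..q} \<alpha>' = A q + t * B q"
        using ex[of t] t unfolding \<delta>'_def by auto
      have "t \<le> m/(2*MD)" using t unfolding \<delta>'_def by simp
      hence "t * MD \<le> m/(2*MD) * MD" using MD by (intro mult_right_mono) auto
      hence tMD: "t * MD \<le> m/2" using MD by simp
      have ytpos: "y q + t * D q > 0" if "q \<in> {0..1}" for q
      proof -
        have "\<bar>t * D q\<bar> \<le> t * MD" using MD(2)[OF that] t by (simp add: abs_mult)
        thus ?thesis using ym[OF that] tMD mpos unfolding y_def by linarith
      qed
      have iyt: "(\<lambda>q. 1 / (y q + t * D q)) integrable_on {0..1}"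
        using cy cD ytpos by (intro integrable_continuous_interval continuous_intros) (auto, fastforce)
      have e1: "integral {0..1} (\<lambda>q. Xi q * integral {0..q} \<alpha>') = integral {0..1} (\<lambda>q. Xi q * A q) + t * integral {0..1} (\<lambda>q. Xi q * B q)"
      proof -
        have "integral {0..1} (\<lambda>q. Xi q * integral {0..q} \<alpha>') = integral {0..1} (\<lambda>q. Xi q * A q + t * (Xi q * B q))"
          by (rule integral_cong) (use ia in \<open>auto simp: algebra_simps\<close>)
        also have "\<dots> = integral {0..1} (\<lambda>q. Xi q * A q) + integral {0..1} (\<lambda>q. t * (Xi q * B q))"
          by (rule integral_add[OF iXA]) (use cXi cB in \<open>intro integrable_continuous_interval continuous_intros\<close>)
        finally show ?thesis by simp
      qed
      have e2: "integral {0..1} (\<lambda>q. 1 / (L0 + t*l - integral {0..q} \<alpha>')) = integral {0..1} (\<lambda>q. 1 / (y q + t * D q))"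
        by (rule integral_cong) (use ia in \<open>auto simp: y_def D_def algebra_simps\<close>)
      have Q1: "Qfun \<gamma> h (L0 + t*l) \<alpha>' = 1/2 * (K1*(L0 + t*l) - (integral {0..1} (\<lambda>q. Xi q * A q) + t * integral {0..1} (\<lambda>q. Xi q * B q)) + integral {0..1} (\<lambda>q. 1 / (y q + t * D q)))"
        using e1 e2 unfolding Qfun_def K1_def Xi_def by simp
      have "Qfun \<gamma> h L0 \<alpha>0 \<le> Qfun \<gamma> h (L0 + t*l) \<alpha>'" by (rule minim[OF a'])
      hence "0 \<le> t * c + (integral {0..1} (\<lambda>q. 1 / (y q + t * D q)) - integral {0..1} (\<lambda>q. 1 / y q))"
        unfolding Q0 Q1 c_def by (simp add: algebra_simps)
      also have "integral {0..1} (\<lambda>q. 1 / (y q + t * D q)) - integral {0..1} (\<lambda>q. 1 / y q) = integral {0..1} (\<lambda>q. 1 / (y q + t * D q) - 1 / y q)"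
        by (rule integral_diff[OF iyt iy, symmetric])
      finally show "0 \<le> t * c + integral {0..1} (\<lambda>q. 1 / (y q + t * D q) - 1 / y q)" .
    qed
    thus ?thesis unfolding c_def D_def y_def by simp
  qed
  have IyK: "integral {0..1} (\<lambda>q. 1/(L0 - A q)^2) = K1"
  proof -
    have "0 \<le> K1*1 - integral {0..1} (\<lambda>q. Xi q * 0) - integral {0..1} (\<lambda>q. (1 - 0)/(L0 - A q)^2)"
    proof (rule pert[of "\<lambda>q. 0" 1 1])
      fix t :: real assume t: "0 < t" "t < 1"
      have "(L0 + t*1, \<alpha>0) \<in> classK" using inK t by (auto simp: classK_def)
      thus "\<exists>\<alpha>'. (L0 + t*1, \<alpha>') \<in> classK \<and> (\<forall>q\<in>{0..1}. integral {0..q} \<alpha>' = A q + t * 0)"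
        by (auto simp: A_def)
    qed auto
    moreover have "0 \<le> K1*(-1) - integral {0..1} (\<lambda>q. Xi q * 0) - integral {0..1} (\<lambda>q. (-1 - 0)/(L0 - A q)^2)"
    proof (rule pert[of "\<lambda>q. 0" m "-1"])
      fix t :: real assume t: "0 < t" "t < m"
      have "A 1 \<ge> 0" using Anonneg[of 1] by simp
      hence "(L0 + t*(-1), \<alpha>0) \<in> classK" using inK t unfolding classK_def m_def A_def by auto
      thus "\<exists>\<alpha>'. (L0 + t*(-1), \<alpha>') \<in> classK \<and> (\<forall>q\<in>{0..1}. integral {0..q} \<alpha>' = A q + t * 0)"
        by (auto simp: A_def)
    qed (use mpos in auto)
    ultimately show ?thesis by simp
  qed
  define S where "S = {s\<in>{0..<1}. \<alpha>0 s > 0}"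
  define q0 where "q0 = q0_of \<alpha>0"
  have q0S: "q0 = (if S \<noteq> {} then Inf S else 1)" unfolding q0_def q0_of_def S_def ..
  have q0r: "0 \<le> q0" "q0 \<le> 1"
  proof -
    show "0 \<le> q0"
    proof (cases "S = {}")
      case False thus ?thesis unfolding q0S by (auto intro!: cInf_greatest simp: S_def)
    qed (simp add: q0S)
    show "q0 \<le> 1"
    proof (cases "S = {}")
      case False
      then obtain s where "s \<in> S" by auto
      moreover have "bdd_below S" unfolding S_def by (rule bdd_belowI[of _ 0]) auto
      ultimately have "Inf S \<le> s" by (rule cInf_lower)
      thus ?thesis using False \<open>s \<in> S\<close> unfolding q0S S_def by auto
    qed (simp add: q0S)
  qed
  have azero: "\<alpha>0 x = 0" if "0 \<le> x" "x < q0" for x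
  proof (rule ccontr)
    assume "\<alpha>0 x \<noteq> 0"
    hence "x \<in> S" using anonneg[of x] that q0r unfolding S_def by auto
    hence "S \<noteq> {}" by auto
    moreover have "bdd_below S" unfolding S_def by (rule bdd_belowI[of _ 0]) auto
    ultimately have "q0 \<le> x" using cInf_lower[OF \<open>x \<in> S\<close>] unfolding q0S by auto
    thus False using that by auto
  qed
  have apos: "\<alpha>0 x > 0" if "q0 < x" "x < 1" for x
  proof -
    have "S \<noteq> {}" using that q0S by auto
    hence "Inf S < x" using that q0S by auto
    then obtain s where s: "s \<in> S" "s < x" using cInf_less_iff[OF \<open>S \<noteq> {}\<close>] bdd_belowI[of S 0] unfolding S_def by auto
    hence "\<alpha>0 s \<le> \<alpha>0 x" using amono that unfolding S_def by (auto intro: mono_onD)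
    thus ?thesis using s unfolding S_def by auto
  qed
  have A0: "A q = 0" if "0 \<le> q" "q \<le> q0" for q
  proof -
    have "A q = integral {0..q} (\<lambda>x. 0)" unfolding A_def
      by (rule integral_spike[of "{q}"]) (use that azero in auto)
    thus ?thesis by simp
  qed
  define G where "G q = 1/(L0 - A q)^2 - Xi q" for q
  have ynz: "L0 - A q \<noteq> 0" if "q \<in> {0..1}" for q using ym[OF that] mpos by auto
  have cY: "continuous_on {0..1} (\<lambda>q. 1/(L0 - A q)^2)"
    using cA ynz by (intro continuous_intros) auto
  have cG: "continuous_on {0..1} G" unfolding G_def by (rule continuous_on_diff[OF cY cXi])
  obtain M where M: "M > 0" "\<And>q. q \<in> {0..1} \<Longrightarrow> \<bar>G q\<bar> \<le> M" using cont_bound[OF cG] by blast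
  define H where "H x = integral {x..1} G" for x
  have iG: "G integrable_on {0..1}" using cG by (rule integrable_continuous_interval)
  have cH: "continuous_on {0..1} H" unfolding H_def by (rule indefinite_integral_continuous_1'[OF iG])
  have Hq0: "H q0 = h\<^sup>2 + deriv (xi \<gamma>) q0 - q0 / L0^2"
  proof -
    have iY: "(\<lambda>q. 1/(L0 - A q)^2) integrable_on {0..1}" using cY by (rule integrable_continuous_interval)
    have iY': "(\<lambda>q. 1/(L0 - A q)^2) integrable_on {q0..1}" by (rule integrable_subinterval_real[OF iY]) (use q0r in auto)
    have iX': "Xi integrable_on {q0..1}"
      by (rule integrable_subinterval_real[OF integrable_continuous_interval[OF cXi]]) (use q0r in auto)
    have "H q0 = integral {q0..1} (\<lambda>q. 1/(L0 - A q)^2) - integral {q0..1} Xi"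
      unfolding H_def G_def by (rule integral_diff[OF iY' iX'])
    moreover have "integral {0..1} (\<lambda>q. 1/(L0 - A q)^2) = integral {0..q0} (\<lambda>q. 1/(L0 - A q)^2) + integral {q0..1} (\<lambda>q. 1/(L0 - A q)^2)"
      using Henstock_Kurzweil_Integration.integral_combine[OF q0r iY] by simp
    moreover have "integral {0..q0} (\<lambda>q. 1/(L0 - A q)^2) = q0 / L0^2"
    proof -
      have "integral {0..q0} (\<lambda>q. 1/(L0 - A q)^2) = integral {0..q0} (\<lambda>q. 1/L0^2)"
        by (rule integral_cong) (use A0 in auto)
      thus ?thesis using q0r by simp
    qed
    moreover have "integral {q0..1} Xi = deriv (xi \<gamma>) 1 - deriv (xi \<gamma>) q0"
    proof (rule integral_unique, rule fundamental_theorem_of_calculus)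
      show "q0 \<le> 1" by fact
      fix x assume x: "x \<in> {q0..1}"
      hence "\<bar>x\<bar> < 2" using q0r by auto
      hence "(deriv (xi \<gamma>) has_real_derivative Xi x) (at x)" using dg g2 unfolding Xi_def by metis
      thus "(deriv (xi \<gamma>) has_vector_derivative Xi x) (at x within {q0..1})"
        by (simp add: has_real_derivative_iff_has_vector_derivative has_vector_derivative_at_within)
    qed
    ultimately show ?thesis using IyK unfolding K1_def by simp
  qed
  have P3: "0 \<le> integral {0..1} (\<lambda>q. (k * max 0 (min q r - s) - A (min q r)) * G q)"
    if sr: "0 \<le> s" "s \<le> r" "r < 1" and kk: "0 \<le> k" "k \<le> \<alpha>0 r"
      and z: "\<And>x. 0 \<le> x \<Longrightarrow> x < s \<Longrightarrow> \<alpha>0 x = 0" for k s r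
  proof -
    define B where "B q = k * max 0 (min q r - s) - A (min q r)" for q
    have cAm: "continuous_on {0..1} (\<lambda>q. A (min q r))"
      by (rule continuous_on_compose2[OF cA]) (use sr in \<open>auto intro!: continuous_intros\<close>)
    have cB: "continuous_on {0..1} B" unfolding B_def using cAm by (intro continuous_intros)
    define pf where "pf t x = \<alpha>0 x + t * ((if s \<le> x \<and> x < r then k else 0) - (if x < r then \<alpha>0 x else 0))" for t x
    have hint: "((pf t) has_integral (A q + t * B q)) {0..q}" if q: "q \<in> {0..1}" for t q
    proof -
      define ac where "ac x = \<alpha>0 x + t * ((if x \<in> {s..r} then k else 0) - (if x \<in> {..r} then \<alpha>0 x else 0))" for x
      have eq1: "{s..r} \<inter> {0..q} = {s..min q r}" using sr q by auto
      have eq2: "{..r} \<inter> {0..q} = {0..min q r}" using sr q by auto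
      have i1: "((\<lambda>x. if x \<in> {s..r} then k else 0) has_integral (k * max 0 (min q r - s))) {0..q}"
      proof -
        have int: "(\<lambda>x. if x \<in> {s..r} then k else 0) integrable_on {0..q}"
          by (subst integrable_restrict_Int, subst eq1) (rule integrable_const_ivl)
        have "integral {0..q} (\<lambda>x. if x \<in> {s..r} then k else 0) = k * max 0 (min q r - s)"
          using sr by (subst integral_restrict_Int, subst eq1) (auto simp: max_def min_def)
        thus ?thesis using integrable_integral[OF int] by simp
      qed
      have i2: "((\<lambda>x. if x \<in> {..r} then \<alpha>0 x else 0) has_integral A (min q r)) {0..q}"
      proof -
        have int0: "\<alpha>0 integrable_on {0..min q r}" by (rule aint') (use q in auto)
        have int: "(\<lambda>x. if x \<in> {..r} then \<alpha>0 x else 0) integrable_on {0..q}"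
          using int0 by (subst integrable_restrict_Int, subst eq2) simp
        have "integral {0..q} (\<lambda>x. if x \<in> {..r} then \<alpha>0 x else 0) = A (min q r)"
          by (subst integral_restrict_Int, subst eq2) (simp add: A_def)
        thus ?thesis using integrable_integral[OF int] by simp
      qed
      have i0: "(\<alpha>0 has_integral A q) {0..q}"
        unfolding A_def by (rule integrable_integral, rule aint') (use q in auto)
      have "(ac has_integral (A q + t * (k * max 0 (min q r - s) - A (min q r)))) {0..q}"
        unfolding ac_def by (intro has_integral_add i0 has_integral_mult_right has_integral_diff i1 i2)
      hence "(ac has_integral (A q + t * B q)) {0..q}" by (simp add: B_def)
      thus ?thesis
        by (rule has_integral_spike[of "{r}", rotated 2]) (auto simp: pf_def ac_def)
    qed
    have v: "pf t x = (if x < s then 0 else if x < r then (1-t)*\<alpha>0 x + t*k else \<alpha>0 x)" if "0 \<le> x" for t x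
      using z[OF that] sr by (auto simp: pf_def algebra_simps)
    have ar_nn: "0 \<le> \<alpha>0 r" using anonneg sr by auto
    define \<delta> where "\<delta> = min 1 (m / (\<bar>B 1\<bar> + 1))"
    have "0 \<le> K1*0 - integral {0..1} (\<lambda>q. Xi q * B q) - integral {0..1} (\<lambda>q. (0 - B q)/(L0 - A q)^2)"
    proof (rule pert[OF cB, of \<delta>])
      show "\<delta> > 0" unfolding \<delta>_def using mpos by auto
      fix t assume t: "0 < t" "t < \<delta>"
      have t1: "t < 1" using t unfolding \<delta>_def by auto
      have "t < m / (\<bar>B 1\<bar> + 1)" using t unfolding \<delta>_def by auto
      hence "t * (\<bar>B 1\<bar> + 1) < m" by (simp add: field_simps)
      moreover have "t * B 1 \<le> t * (\<bar>B 1\<bar> + 1)" using t by (intro mult_left_mono) auto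
      ultimately have tB: "t * B 1 < m" by linarith
      have h1: "((pf t) has_integral (A 1 + t * B 1)) {0..1}" using hint[of 1 t] by simp
      have nn: "0 \<le> pf t x" if "x \<in> {0..<1}" for x
        using v[of x t] that t1 t anonneg[OF that] kk by (auto intro!: add_nonneg_nonneg mult_nonneg_nonneg)
      have mo: "mono_on {0..<1} (pf t)"
      proof (rule mono_onI)
        fix x y :: real assume x: "x \<in> {0..<1}" and y: "y \<in> {0..<1}" and xy: "x \<le> y"
        have axy: "\<alpha>0 x \<le> \<alpha>0 y" using mono_onD[OF amono x y xy] .
        have r01: "r \<in> {0..<1}" using sr by auto
        show "pf t x \<le> pf t y"
        proof (cases "x < s")
          case True thus ?thesis using nn[OF y] v[of x t] x by simp
        next
          case xs: False
          show ?thesis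
          proof (cases "x < r")
            case xr: True
            show ?thesis
            proof (cases "y < r")
              case True
              have "(1-t)*\<alpha>0 x \<le> (1-t)*\<alpha>0 y" using axy t1 by (intro mult_left_mono) auto
              thus ?thesis using v[of x t] v[of y t] xs xr True xy x y by auto
            next
              case False
              have ar: "\<alpha>0 x \<le> \<alpha>0 r" using mono_onD[OF amono x r01] xr by auto
              have ry: "\<alpha>0 r \<le> \<alpha>0 y" using mono_onD[OF amono r01 y] False by auto
              have "(1-t)*\<alpha>0 x \<le> (1-t)*\<alpha>0 r" using ar t1 by (intro mult_left_mono) auto
              moreover have "t*k \<le> t*\<alpha>0 r" using kk t by (intro mult_left_mono) auto
              ultimately have "(1-t)*\<alpha>0 x + t*k \<le> \<alpha>0 r" by (simp add: algebra_simps)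
              thus ?thesis using v[of x t] v[of y t] xs xr False xy x y ry sr by auto
            qed
          next
            case xr: False
            thus ?thesis using v[of x t] v[of y t] xs xy x y axy sr by auto
          qed
        qed
      qed
      have rc: "continuous (at_right x) (pf t)" if x: "x \<in> {0..<1}" for x
      proof (cases "x < s")
        case True
        show ?thesis
          by (rule cont_right_transfer[of x "\<lambda>y. 0" _ s]) (use True x v in auto)
      next
        case xs: False
        show ?thesis
        proof (cases "x < r")
          case True
          have "continuous (at_right x) (\<lambda>y. (1-t)*\<alpha>0 y + t*k)"
            using arc[OF x] by (intro continuous_intros)
          thus ?thesis
            by (rule cont_right_transfer[of x _ _ r]) (use True xs x v sr in auto)
        next
          case False
          show ?thesis
            by (rule cont_right_transfer[of x \<alpha>0 _ "x+1"]) (use False xs x v sr arc[OF x] in auto)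
        qed
      qed
      have "(L0 + t*0, pf t) \<in> classK"
        unfolding classK_def classN_def using L0pos h1 nn mo rc tB
        by (auto simp: integral_unique m_def intro: has_integral_integrable)
      moreover have "\<forall>q\<in>{0..1}. integral {0..q} (pf t) = A q + t * B q"
        using hint by (auto intro: integral_unique)
      ultimately show "\<exists>\<alpha>'. (L0 + t*0, \<alpha>') \<in> classK \<and> (\<forall>q\<in>{0..1}. integral {0..q} \<alpha>' = A q + t * B q)"
        by blast
    qed
    moreover have "integral {0..1} (\<lambda>q. B q * G q) = - integral {0..1} (\<lambda>q. (0 - B q)/(L0 - A q)^2) - integral {0..1} (\<lambda>q. Xi q * B q)"
    proof -
      have c1: "continuous_on {0..1} (\<lambda>q. - ((0 - B q)/(L0 - A q)^2))"
        using cB cA ynz by (intro continuous_intros) auto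
      have "integral {0..1} (\<lambda>q. B q * G q) = integral {0..1} (\<lambda>q. - ((0 - B q)/(L0 - A q)^2) - Xi q * B q)"
        by (rule integral_cong) (simp add: G_def algebra_simps)
      also have "\<dots> = integral {0..1} (\<lambda>q. - ((0 - B q)/(L0 - A q)^2)) - integral {0..1} (\<lambda>q. Xi q * B q)"
        by (rule integral_diff) (use c1 cXi cB in \<open>auto intro!: integrable_continuous_interval continuous_intros\<close>)
      finally show ?thesis by simp
    qed
    ultimately show ?thesis unfolding B_def by simp
  qed
  have Apos: "A r > 0" if "q0 < r" "r < 1" for r
  proof -
    define md where "md = (q0 + r)/2"
    have md: "0 \<le> md" "md \<le> r" "q0 < md" using that q0r by (auto simp: md_def)
    have amd: "\<alpha>0 md > 0" using apos[of md] md that by auto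
    have "integral {md..r} (\<lambda>x. \<alpha>0 md) \<le> integral {md..r} \<alpha>0"
    proof (rule integral_le)
      show "\<alpha>0 integrable_on {md..r}" by (rule aint') (use md that in auto)
      fix x assume "x \<in> {md..r}"
      thus "\<alpha>0 md \<le> \<alpha>0 x" using mono_onD[OF amono, of md x] md that by auto
    qed auto
    hence "\<alpha>0 md * (r - md) \<le> integral {md..r} \<alpha>0" using md by (simp add: mult.commute)
    moreover have "\<alpha>0 md * (r - md) > 0" using amd md that by (simp add: md_def)
    moreover have "A r = A md + integral {md..r} \<alpha>0" by (rule Asplit) (use md that in auto)
    moreover have "0 \<le> A md" by (rule Anonneg) (use md that in auto)
    ultimately show ?thesis by linarith
  qed
  have Aub: "A r \<le> \<alpha>0 r * (r - q0)" if "q0 \<le> r" "r < 1" for r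
  proof -
    have "integral {q0..r} \<alpha>0 \<le> integral {q0..r} (\<lambda>x. \<alpha>0 r)"
    proof (rule integral_le)
      show "\<alpha>0 integrable_on {q0..r}" by (rule aint') (use q0r that in auto)
      fix x assume "x \<in> {q0..r}"
      thus "\<alpha>0 x \<le> \<alpha>0 r" using mono_onD[OF amono, of x r] q0r that by auto
    qed auto
    moreover have "A r = A q0 + integral {q0..r} \<alpha>0" by (rule Asplit) (use q0r that in auto)
    moreover have "A q0 = 0" using A0 q0r by auto
    ultimately show ?thesis using that by (simp add: mult.commute)
  qed
  have Wsplit: "\<bar>integral {0..1} (\<lambda>q. A (min q r) * G q) - A r * H r\<bar> \<le> A r * M * (r - q0)"
    if "q0 \<le> r" "r \<le> 1" for r
    unfolding H_def
  proof (rule split_est[OF _ cG q0r(1) that])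
    show "continuous_on {0..1} (\<lambda>q. A (min q r))"
      by (rule continuous_on_compose2[OF cA]) (use that q0r in \<open>auto intro!: continuous_intros\<close>)
    show "\<And>q. q \<in> {0..q0} \<Longrightarrow> A (min q r) = 0" using A0 that by auto
    show "\<And>q. q \<in> {q0..r} \<Longrightarrow> \<bar>A (min q r)\<bar> \<le> A r"
      using Anonneg Amono that q0r by auto
    show "\<And>q. q \<in> {r..1} \<Longrightarrow> A (min q r) = A r" by auto
    show "\<And>q. q \<in> {0..1} \<Longrightarrow> \<bar>G q\<bar> \<le> M" by (rule M(2))
  qed
  have Psplit: "integral {0..1} (\<lambda>q. max 0 (min q r - s) * G q) \<le> (r - s) * H r + (r - s) * M * (r - s)"
    if "0 \<le> s" "s \<le> r" "r \<le> 1" for r s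
  proof -
    have "\<bar>integral {0..1} (\<lambda>q. max 0 (min q r - s) * G q) - (r - s) * integral {r..1} G\<bar> \<le> (r - s) * M * (r - s)"
    proof (rule split_est[OF _ cG that])
      show "continuous_on {0..1} (\<lambda>q. max 0 (min q r - s))" by (intro continuous_intros)
      show "\<And>q. q \<in> {0..s} \<Longrightarrow> max 0 (min q r - s) = 0" by auto
      show "\<And>q. q \<in> {s..r} \<Longrightarrow> \<bar>max 0 (min q r - s)\<bar> \<le> r - s" by auto
      show "\<And>q. q \<in> {r..1} \<Longrightarrow> max 0 (min q r - s) = r - s" using that by auto
      show "\<And>q. q \<in> {0..1} \<Longrightarrow> \<bar>G q\<bar> \<le> M" by (rule M(2))
    qed
    thus ?thesis unfolding H_def by linarith
  qed
  have Hz: "H q0 = 0"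
  proof (rule ccontr)
    assume ne: "H q0 \<noteq> 0"
    have q0lt: "q0 < 1"
    proof (rule ccontr)
      assume "\<not> q0 < 1"
      hence "q0 = 1" using q0r by auto
      thus False using ne by (simp add: H_def)
    qed
    have "\<exists>d>0. \<forall>x\<in>{0..1}. dist x q0 < d \<longrightarrow> dist (H x) (H q0) < \<bar>H q0\<bar>/2"
    proof -
      have pos: "\<bar>H q0\<bar>/2 > 0" using ne by simp
      have q0in: "q0 \<in> {0..1}" using q0r by auto
      from cH have "\<forall>x\<in>{0..1}. \<forall>e>0. \<exists>\<delta>>0. \<forall>x'\<in>{0..1}. dist x' x < \<delta> \<longrightarrow> dist (H x') (H x) < e"
        by (simp only: continuous_on_iff)
      hence "\<forall>e>0. \<exists>\<delta>>0. \<forall>x'\<in>{0..1}. dist x' q0 < \<delta> \<longrightarrow> dist (H x') (H q0) < e" using q0in by blast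
      thus ?thesis using pos by blast
    qed
    then obtain d where d: "d > 0" "\<And>x. x \<in> {0..1} \<Longrightarrow> \<bar>x - q0\<bar> < d \<Longrightarrow> \<bar>H x - H q0\<bar> < \<bar>H q0\<bar>/2"
      by (auto simp: dist_real_def)
    show False
    proof (cases "H q0 > 0")
      case Hp: True
      define \<epsilon> where "\<epsilon> = min (d/2) (min ((1-q0)/2) (H q0/(4*M)))"
      have ep1: "\<epsilon> > 0" unfolding \<epsilon>_def using d Hp M q0lt by simp
      have ep2: "\<epsilon> \<le> d/2" unfolding \<epsilon>_def by (rule min.cobounded1)
      have ep3: "\<epsilon> \<le> (1-q0)/2" unfolding \<epsilon>_def by (rule order_trans[OF min.cobounded2 min.cobounded1])
      have ep4: "\<epsilon> \<le> H q0/(4*M)" unfolding \<epsilon>_def by (rule order_trans[OF min.cobounded2 min.cobounded2])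
      note ep = ep1 ep2 ep3 ep4
      define r where "r = q0 + \<epsilon>"
      have r: "q0 < r" "r < 1" using ep q0lt by (auto simp: r_def)
      have hd: "\<bar>H r - H q0\<bar> < \<bar>H q0\<bar>/2" by (rule d(2)) (use r q0r ep in \<open>auto simp: r_def\<close>)
      have Hr: "H r > H q0 / 2" using hd Hp by arith
      have "M * \<epsilon> \<le> M * (H q0/(4*M))" using ep M by (intro mult_left_mono) auto
      hence Me: "M * \<epsilon> \<le> H q0 / 4" using M by simp
      have "0 \<le> integral {0..1} (\<lambda>q. (0 * max 0 (min q r - 0) - A (min q r)) * G q)"
        by (rule P3) (use r q0r anonneg in auto)
      also have "\<dots> = - integral {0..1} (\<lambda>q. A (min q r) * G q)" by simp
      finally have i: "integral {0..1} (\<lambda>q. A (min q r) * G q) \<le> 0" by simp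
      have "A r * H r - A r * M * (r - q0) \<le> integral {0..1} (\<lambda>q. A (min q r) * G q)"
        using Wsplit[of r] r by auto
      moreover have "A r * (H q0 / 4) < A r * (H r - M * (r - q0))"
        using Apos[OF r] Hr Me by (intro mult_strict_left_mono) (auto simp: r_def)
      moreover have "0 < A r * (H q0 / 4)" using Apos[OF r] Hp by simp
      ultimately show False using i by (simp add: algebra_simps)
    next
      case False
      hence Hn: "H q0 < 0" using ne by auto
      have q0p: "q0 > 0"
      proof (rule ccontr)
        assume "\<not> q0 > 0"
        hence "q0 = 0" using q0r by auto
        hence "H q0 = h\<^sup>2" using Hq0 g1[of 0] g10 by simp
        thus False using Hn by simp
      qed
      define c where "c = - H q0"
      have cp: "c > 0" using Hn by (simp add: c_def)
      define \<epsilon> where "\<epsilon> = min (d/2) (min (q0/3) (min ((1-q0)/2) (c/(68*M))))"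
      have ep1: "\<epsilon> > 0" unfolding \<epsilon>_def using d cp M q0lt q0p by simp
      have ep2: "\<epsilon> \<le> d/2" unfolding \<epsilon>_def by (rule min.cobounded1)
      have ep3: "\<epsilon> \<le> q0/3" unfolding \<epsilon>_def by (rule order_trans[OF min.cobounded2 min.cobounded1])
      have ep4: "\<epsilon> \<le> (1-q0)/2" unfolding \<epsilon>_def
        by (rule order_trans[OF min.cobounded2 order_trans[OF min.cobounded2 min.cobounded1]])
      have ep5: "\<epsilon> \<le> c/(68*M)" unfolding \<epsilon>_def
        by (rule order_trans[OF min.cobounded2 order_trans[OF min.cobounded2 min.cobounded2]])
      note ep = ep1 ep2 ep3 ep4 ep5
      define r where "r = q0 + \<epsilon>"
      define s where "s = q0 - 3*\<epsilon>"
      define k where "k = \<alpha>0 r"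
      have r: "q0 < r" "r < 1" using ep q0lt by (auto simp: r_def)
      have s: "0 \<le> s" "s \<le> r" "s < q0" using ep by (auto simp: s_def r_def)
      have kp: "k > 0" unfolding k_def using apos r by auto
      have hd: "\<bar>H r - H q0\<bar> < \<bar>H q0\<bar>/2" by (rule d(2)) (use r q0r ep in \<open>auto simp: r_def\<close>)
      have Hr: "H r < - c/2" "H r > - 3*c/2" using hd Hn unfolding c_def by arith+
      have "M * \<epsilon> \<le> M * (c/(68*M))" using ep M by (intro mult_left_mono) auto
      hence Me: "M * \<epsilon> \<le> c / 68" using M by simp
      have P: "0 \<le> integral {0..1} (\<lambda>q. (k * max 0 (min q r - s) - A (min q r)) * G q)"
        by (rule P3) (use r s kp azero in \<open>auto simp: k_def\<close>)
      have cP: "continuous_on {0..1} (\<lambda>q. max 0 (min q r - s) * G q)" using cG by (intro continuous_intros)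
      have cW: "continuous_on {0..1} (\<lambda>q. A (min q r) * G q)"
        by (intro continuous_intros continuous_on_compose2[OF cA] cG) (use r q0r in auto)
      have "integral {0..1} (\<lambda>q. (k * max 0 (min q r - s) - A (min q r)) * G q)
          = integral {0..1} (\<lambda>q. k * (max 0 (min q r - s) * G q) - A (min q r) * G q)"
        by (rule integral_cong) (simp add: algebra_simps)
      also have "\<dots> = k * integral {0..1} (\<lambda>q. max 0 (min q r - s) * G q) - integral {0..1} (\<lambda>q. A (min q r) * G q)"
        using integral_diff[OF integrable_continuous_interval[OF continuous_on_mult_left[OF cP, of k]] integrable_continuous_interval[OF cW]]
        by simp
      finally have P': "0 \<le> k * integral {0..1} (\<lambda>q. max 0 (min q r - s) * G q) - integral {0..1} (\<lambda>q. A (min q r) * G q)"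
        using P by simp
      have rs: "r - s = 4*\<epsilon>" "r - q0 = \<epsilon>" by (auto simp: r_def s_def)
      have I1: "integral {0..1} (\<lambda>q. max 0 (min q r - s) * G q) \<le> 4*\<epsilon> * H r + 16 * \<epsilon> * (M * \<epsilon>)"
        using Psplit[of s r] s r rs by (simp add: algebra_simps)
      have I2: "A r * H r - A r * (M * \<epsilon>) \<le> integral {0..1} (\<lambda>q. A (min q r) * G q)"
        using Wsplit[of r] r rs by (auto simp: algebra_simps)
      have Ar: "0 \<le> A r" "A r \<le> k * \<epsilon>" using Anonneg[of r] Aub[of r] r q0r rs by (auto simp: k_def)
      have "k * integral {0..1} (\<lambda>q. max 0 (min q r - s) * G q) \<le> k * (4*\<epsilon> * H r + 16 * \<epsilon> * (M * \<epsilon>))"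
        using I1 kp by (intro mult_left_mono) auto
      moreover have "- (A r * H r) \<le> k * \<epsilon> * (3*c/2)"
      proof -
        have "- (A r * H r) = A r * (- H r)" by simp
        also have "\<dots> \<le> (k * \<epsilon>) * (3*c/2)" using Ar Hr cp by (intro mult_mono) auto
        finally show ?thesis .
      qed
      moreover have "A r * (M * \<epsilon>) \<le> k * \<epsilon> * (c/68)"
        using Ar Me M ep by (intro mult_mono) auto
      moreover have "k * (4*\<epsilon> * H r) \<le> k * (4*\<epsilon> * (-c/2))"
        using kp ep Hr by (intro mult_left_mono) auto
      moreover have "k * (16 * \<epsilon> * (M * \<epsilon>)) \<le> k * (16 * \<epsilon> * (c/68))"
        using kp ep Me by (intro mult_left_mono) auto
      moreover have "0 < k * \<epsilon> * c" using kp ep cp by simp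
      ultimately show False using P' I2 by (simp add: algebra_simps)
    qed
  qed
  show ?thesis
  proof -
    have "h\<^sup>2 + deriv (xi \<gamma>) q0 - q0 / L0^2 = 0" using Hz Hq0 by simp
    hence "L0^2 * (h\<^sup>2 + deriv (xi \<gamma>) q0 - q0 / L0^2) = 0" by simp
    hence "L0^2 * (deriv (xi \<gamma>) q0 + h\<^sup>2) = q0" using L0pos by (simp add: algebra_simps)
    thus ?thesis unfolding q0_def .
  qed
qed

end
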